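(* Let $\gamma:[0,1]\to\mathbb{R}^{d}$ be a rationally non-degenerate analytic curve of order $\kappa\in\mathbb{N}$ (so $\kappa<\infty$). Then there exists a sequence $\{\rho_{n}\}_{n=1}^{\infty}$ satisfying $n^{\kappa}\leq\rho_{n}\leq n^{(\kappa+1)^{2}}$ for all $n\in\mathbb{N}$ such that the sequence of probability measures \[ \mu_{n}=\frac{1}{n}\sum_{k=1}^{n}\delta_{\pi(\rho_{n}\gamma(k/n))} \] on $\mathbb{T}^{d}=\mathbb{R}^{d}/\mathbb{Z}^{d}$ does not equidistribute.
   Context: $\pi:\mathbb{R}^{d}\to\mathbb{R}^{d}/\mathbb{Z}^{d}$ is the natural projection. A sequence of probability measures $\mu_n$ on $\mathbb{T}^d$ equidistributes if $\lim_{n\to\infty}\mu_{n}(f)=\int_{\mathbb{T}^{d}}f\,d\mathbf{x}$ for all continuous $f$ on $\mathbb{T}^{d}$, where $d\mathbf{x}$ is normalized Haar measure. "Analytic" means real analytic (on a neighbourhood of $[0,1]$). For a smooth curve $\gamma:[0,1]\to\mathbb{R}^{d}$ and $j\in\mathbb{N}$, $\gamma^{(j)}$ denotes the componentwise $j$-th derivative. $\gamma$ is rationally non-degenerate of order $\kappa\in\mathbb{N}\cup\{\infty\}$ if $\kappa=\sup\{j\in\mathbb{N}: \text{for every }\mathbf{h}\in\mathbb{Z}^{d}\setminus\{\mathbf{0}\},\ t\mapsto\langle\mathbf{h},\gamma^{(j)}(t)\rangle\text{ is not identically zero}\}$. *)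

theory Defs
  imports "HOL-Analysis.Analysis"
begin

definition real_analytic_on :: "(real \<Rightarrow> real) \<Rightarrow> real set \<Rightarrow> bool" where
  "real_analytic_on f S \<longleftrightarrow>
     (\<forall>x\<in>S. \<exists>r>0. \<exists>a::nat \<Rightarrow> real. \<forall>y. \<bar>y - x\<bar> < r \<longrightarrow> (\<lambda>n. a n * (y - x) ^ n) sums f y)"

definition analytic_curve :: "(real \<Rightarrow> real ^ 'd) \<Rightarrow> bool" where
  "analytic_curve \<gamma> \<longleftrightarrow>
     (\<exists>U. open U \<and> {0..1} \<subseteq> U \<and> (\<forall>i. real_analytic_on (\<lambda>t. \<gamma> t $ i) U))"

definition curve_deriv :: "nat \<Rightarrow> (real \<Rightarrow> real ^ 'd) \<Rightarrow> real \<Rightarrow> real ^ 'd" where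
  "curve_deriv j \<gamma> t = (\<chi> i. (deriv ^^ j) (\<lambda>s. \<gamma> s $ i) t)"

definition nondeg_at :: "(real \<Rightarrow> real ^ 'd) \<Rightarrow> nat \<Rightarrow> bool" where
  "nondeg_at \<gamma> j \<longleftrightarrow>
     (\<forall>h :: int ^ 'd. h \<noteq> 0 \<longrightarrow>
        \<not> (\<forall>t\<in>{0..1}. (\<chi> i. real_of_int (h $ i)) \<bullet> curve_deriv j \<gamma> t = 0))"

definition rat_nondeg_order :: "(real \<Rightarrow> real ^ 'd) \<Rightarrow> nat \<Rightarrow> bool" where
  "rat_nondeg_order \<gamma> \<kappa> \<longleftrightarrow>
     \<kappa> \<ge> 1 \<and> nondeg_at \<gamma> \<kappa> \<and> (\<forall>j>\<kappa>. \<not> nondeg_at \<gamma> j)"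

text \<open>Continuous functions on the torus R^d/Z^d = continuous Z^d-periodic functions on R^d.\<close>
definition torus_periodic :: "(real ^ 'd \<Rightarrow> real) \<Rightarrow> bool" where
  "torus_periodic f \<longleftrightarrow> (\<forall>x. \<forall>h :: int ^ 'd. f (x + (\<chi> i. real_of_int (h $ i))) = f x)"

text \<open>Equidistribution of a sequence of empirical measures (1/n) sum_{k=1}^n delta_{pi(x n k)}
  against normalized Haar measure (= Lebesgue measure on the unit cube).\<close>
definition equidistributes :: "(nat \<Rightarrow> nat \<Rightarrow> real ^ 'd) \<Rightarrow> bool" where
  "equidistributes x \<longleftrightarrow>
     (\<forall>f. continuous_on UNIV f \<and> torus_periodic f \<longrightarrow>
        ((\<lambda>n. (1 / real n) * (\<Sum>k=1..n. f (x n k))) \<longlonglongrightarrow> integral (cbox 0 One) f))"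

end

theory Submission
  imports Defs "HOL-Analysis.Kronecker_Approximation_Theorem" "HOL-Real_Asymp.Real_Asymp"
begin


lemma analytic_deriv:
  assumes "real_analytic_on f U"
  shows "real_analytic_on (deriv f) U \<and> (\<forall>x\<in>U. (f has_real_derivative deriv f x) (at x))"
proof -
  have key: "\<exists>r>0. \<exists>a::nat \<Rightarrow> real. (\<forall>y. \<bar>y - x\<bar> < r \<longrightarrow> (\<lambda>n. a n * (y - x) ^ n) sums deriv f y)
     \<and> (f has_real_derivative deriv f x) (at x)" if "x \<in> U" for x
  proof -
    obtain r a where r: "r > 0" and a: "\<And>y. \<bar>y - x\<bar> < r \<Longrightarrow> (\<lambda>n. a n * (y - x) ^ n) sums f y"
      using assms \<open>x \<in> U\<close> unfolding real_analytic_on_def by blast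
    define F where "F z = (\<Sum>n. a n * z ^ n)" for z :: real
    define F' where "F' z = (\<Sum>n. diffs a n * z ^ n)" for z :: real
    have sF: "(\<lambda>n. a n * z ^ n) sums f (x + z)" if "norm z < r" for z
      using a[of "x + z"] that by simp
    have Fe: "F z = f (x + z)" if "norm z < r" for z
      using sF[OF that] unfolding F_def by (simp add: sums_iff)
    have D: "(f has_real_derivative F' (y - x)) (at y) \<and> (\<lambda>n. diffs a n * (y - x) ^ n) sums F' (y - x)"
      if y: "\<bar>y - x\<bar> < r" for y
    proof -
      have dF: "(F has_real_derivative F' (y - x)) (at (y - x))"
        unfolding F_def F'_def
        by (rule termdiffs_strong'[where K = r]) (use sF sums_summable y in auto)
      have dg: "((\<lambda>z. f (x + z)) has_real_derivative F' (y - x)) (at (y - x))"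
        by (rule has_field_derivative_transform_within_open[OF dF, of "ball 0 r"])
           (use y Fe in \<open>auto simp: dist_norm\<close>)
      have "((\<lambda>w. f (x + (w - x))) has_real_derivative F' (y - x)) (at y)"
        using dg DERIV_shift[of "\<lambda>z. f (x + z)" "F' (y - x)" "y" "-x"] by simp
      then have d1: "(f has_real_derivative F' (y - x)) (at y)" by simp
      have "(\<lambda>n. diffs a n * (y - x) ^ n) sums F' (y - x)"
        by (rule termdiffs_sums_strong[where K = r and f = "\<lambda>z. f (x + z)"])
           (use sF dg y in auto)
      with d1 show ?thesis by blast
    qed
    have "\<forall>y. \<bar>y - x\<bar> < r \<longrightarrow> (\<lambda>n. diffs a n * (y - x) ^ n) sums deriv f y"
      using D DERIV_imp_deriv by metis
    moreover have "(f has_real_derivative deriv f x) (at x)"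
      using D[of x] r DERIV_imp_deriv by fastforce
    ultimately show ?thesis using r by blast
  qed
  then show ?thesis unfolding real_analytic_on_def by blast
qed

lemma analytic_derivs:
  assumes "real_analytic_on f U" "x \<in> U"
  shows "((deriv ^^ m) f has_real_derivative (deriv ^^ Suc m) f x) (at x)"
proof -
  have "real_analytic_on ((deriv ^^ m) f) U" for m
    by (induction m) (use assms analytic_deriv in auto)
  then show ?thesis using analytic_deriv assms by auto
qed



lemma approx_bound:
  fixes c :: "nat \<Rightarrow> real" and p :: "nat \<Rightarrow> int" and M :: int and n s k :: nat
  assumes n: "n \<ge> 1" and s: "s \<ge> 1" and k: "k \<le> n"
    and ap: "\<And>i. i < Suc \<kappa> \<Longrightarrow> \<bar>of_int M * c i - of_int (p i)\<bar> < 1 / (real n ^ \<kappa> * real s)"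
  shows "\<bar>real n ^ \<kappa> * of_int M * (\<Sum>m<Suc \<kappa>. c m * (real k / real n) ^ m)
           - of_int (\<Sum>m<Suc \<kappa>. p m * int k ^ m * int n ^ (\<kappa> - m))\<bar> \<le> real (Suc \<kappa>) / real s"
proof -
  have eq: "real n ^ \<kappa> * of_int M * (c m * (real k / real n) ^ m)
      = (of_int M * c m) * (real k ^ m * real n ^ (\<kappa> - m))" if "m < Suc \<kappa>" for m
  proof -
    have "real n ^ \<kappa> = real n ^ m * real n ^ (\<kappa> - m)"
      using that by (simp flip: power_add)
    then show ?thesis using n by (simp add: field_simps power_divide)
  qed
  have "real n ^ \<kappa> * of_int M * (\<Sum>m<Suc \<kappa>. c m * (real k / real n) ^ m)
           - of_int (\<Sum>m<Suc \<kappa>. p m * int k ^ m * int n ^ (\<kappa> - m))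
      = (\<Sum>m<Suc \<kappa>. (of_int M * c m - of_int (p m)) * (real k ^ m * real n ^ (\<kappa> - m)))"
  proof -
    have "real n ^ \<kappa> * of_int M * (\<Sum>m<Suc \<kappa>. c m * (real k / real n) ^ m)
        = (\<Sum>m<Suc \<kappa>. real n ^ \<kappa> * of_int M * (c m * (real k / real n) ^ m))"
      by (rule sum_distrib_left)
    also have "\<dots> = (\<Sum>m<Suc \<kappa>. (of_int M * c m) * (real k ^ m * real n ^ (\<kappa> - m)))"
      by (rule sum.cong) (use eq in auto)
    finally have 1: "real n ^ \<kappa> * of_int M * (\<Sum>m<Suc \<kappa>. c m * (real k / real n) ^ m)
        = (\<Sum>m<Suc \<kappa>. (of_int M * c m) * (real k ^ m * real n ^ (\<kappa> - m)))" .
    have 2: "real_of_int (\<Sum>m<Suc \<kappa>. p m * int k ^ m * int n ^ (\<kappa> - m))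
        = (\<Sum>m<Suc \<kappa>. of_int (p m) * (real k ^ m * real n ^ (\<kappa> - m)))"
      by (simp add: mult.assoc)
    show ?thesis unfolding 1 2 by (simp add: left_diff_distrib sum_subtractf)
  qed
  also have "\<bar>\<dots>\<bar> \<le> (\<Sum>m<Suc \<kappa>. \<bar>(of_int M * c m - of_int (p m)) * (real k ^ m * real n ^ (\<kappa> - m))\<bar>)"
    by (rule sum_abs)
  also have "\<dots> \<le> (\<Sum>m<Suc \<kappa>. 1 / real s)"
  proof (rule sum_mono)
    fix m assume m: "m \<in> {..<Suc \<kappa>}"
    have pos: "real n ^ \<kappa> * real s > 0" using n s by simp
    have kn: "real k ^ m * real n ^ (\<kappa> - m) \<le> real n ^ \<kappa>"
    proof -
      have "real k ^ m * real n ^ (\<kappa> - m) \<le> real n ^ m * real n ^ (\<kappa> - m)"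
        using k by (intro mult_right_mono power_mono) auto
      also have "\<dots> = real n ^ \<kappa>" using m by (simp flip: power_add)
      finally show ?thesis .
    qed
    have "\<bar>(of_int M * c m - of_int (p m)) * (real k ^ m * real n ^ (\<kappa> - m))\<bar>
        = \<bar>of_int M * c m - of_int (p m)\<bar> * (real k ^ m * real n ^ (\<kappa> - m))"
      by (simp add: abs_mult)
    also have "\<dots> \<le> (1 / (real n ^ \<kappa> * real s)) * real n ^ \<kappa>"
      using ap[of m] m kn by (intro mult_mono) auto
    also have "\<dots> = 1 / real s" using n by simp
    finally show "\<bar>(of_int M * c m - of_int (p m)) * (real k ^ m * real n ^ (\<kappa> - m))\<bar> \<le> 1 / real s" .
  qed
  also have "\<dots> = real (Suc \<kappa>) / real s" by simp
  finally show ?thesis .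
qed



lemma poly_rep:
  fixes \<gamma> :: "real \<Rightarrow> real ^ 'd" and h :: "int ^ 'd"
  assumes an: "analytic_curve \<gamma>"
    and z: "\<forall>t\<in>{0..1}. (\<chi> i. real_of_int (h $ i)) \<bullet> curve_deriv (Suc \<kappa>) \<gamma> t = 0"
    and x: "x \<in> {0..1}"
  shows "(\<Sum>i\<in>UNIV. of_int (h $ i) * \<gamma> x $ i)
       = (\<Sum>m<Suc \<kappa>. (\<Sum>i\<in>UNIV. of_int (h $ i) * (deriv ^^ m) (\<lambda>s. \<gamma> s $ i) 0) / fact m * x ^ m)"
proof -
  obtain U where U: "open U" "{0..1} \<subseteq> U" "\<And>i. real_analytic_on (\<lambda>t. \<gamma> t $ i) U"
    using an unfolding analytic_curve_def by blast
  define diff where "diff m t = (\<Sum>i\<in>UNIV. of_int (h $ i) * (deriv ^^ m) (\<lambda>s. \<gamma> s $ i) t)" for m t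
  have d0: "diff 0 = (\<lambda>t. \<Sum>i\<in>UNIV. of_int (h $ i) * \<gamma> t $ i)"
    by (simp add: diff_def fun_eq_iff)
  have D: "(diff m has_real_derivative diff (Suc m) t) (at t)" if "t \<in> U" for m t
    unfolding diff_def
    by (intro DERIV_sum DERIV_cmult analytic_derivs[OF U(3) that])
  have zz: "diff (Suc \<kappa>) t = 0" if "t \<in> {0..1}" for t
    using z that by (simp add: diff_def inner_vec_def curve_deriv_def)
  show ?thesis
  proof (cases "x = 0")
    case True
    then show ?thesis
      by (simp add: d0[symmetric] power_0_left diff_def[symmetric] sum.lessThan_Suc_shift del: sum.lessThan_Suc) (simp add: d0)
  next
    case False
    then have "0 < x" using x by auto
    have "\<exists>t. 0 < t \<and> t < x \<and> diff 0 x = (\<Sum>m<Suc \<kappa>. (diff m 0 / fact m) * (x - 0)^m) + (diff (Suc \<kappa>) t / fact (Suc \<kappa>)) * (x - 0)^(Suc \<kappa>)"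
      by (rule Taylor_up[where a = 0]) (use x \<open>0 < x\<close> in \<open>auto intro!: D intro: subsetD[OF U(2)]\<close>)
    then obtain t where t: "0 < t" "t < x" and eq: "diff 0 x = (\<Sum>m<Suc \<kappa>. (diff m 0 / fact m) * x^m) + (diff (Suc \<kappa>) t / fact (Suc \<kappa>)) * x^(Suc \<kappa>)"
      by auto
    have "diff (Suc \<kappa>) t = 0" using zz t x by auto
    with eq show ?thesis by (simp add: d0 diff_def)
  qed
qed



theorem theorem1p3:
  fixes \<gamma> :: "real \<Rightarrow> real ^ 'd" and \<kappa> :: nat
  assumes "analytic_curve \<gamma>"
    and "rat_nondeg_order \<gamma> \<kappa>"
  shows "\<exists>\<rho> :: nat \<Rightarrow> real.
           (\<forall>n\<ge>1. real n ^ \<kappa> \<le> \<rho> n \<and> \<rho> n \<le> real n ^ ((\<kappa> + 1)^2)) \<and>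
           \<not> equidistributes (\<lambda>n k. \<rho> n *\<^sub>R \<gamma> (real k / real n))"
proof -
  have "\<not> nondeg_at \<gamma> (Suc \<kappa>)" using assms(2) unfolding rat_nondeg_order_def by auto
  then obtain h :: "int ^ 'd" where h0: "h \<noteq> 0"
    and hz: "\<forall>t\<in>{0..1}. (\<chi> i. real_of_int (h $ i)) \<bullet> curve_deriv (Suc \<kappa>) \<gamma> t = 0"
    unfolding nondeg_at_def by blast
  define c where "c m = (\<Sum>i\<in>UNIV. of_int (h $ i) * (deriv ^^ m) (\<lambda>s. \<gamma> s $ i) 0) / fact m" for m
  have poly: "(\<Sum>i\<in>UNIV. of_int (h $ i) * \<gamma> x $ i) = (\<Sum>m<Suc \<kappa>. c m * x ^ m)"
    if "x \<in> {0..1}" for x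
    using poly_rep[OF assms(1) hz that] by (simp add: c_def)
  define E where "E = \<kappa> * Suc \<kappa> + 1"
  define good where "good n m \<longleftrightarrow> 1 \<le> m \<and> m \<le> int n ^ E \<and>
     (\<forall>s\<ge>1. n = s ^ Suc \<kappa> \<longrightarrow> (\<exists>p::nat \<Rightarrow> int. \<forall>i<Suc \<kappa>.
        \<bar>of_int m * c i - of_int (p i)\<bar> < 1 / (real n ^ \<kappa> * real s)))" for n :: nat and m :: int
  have ex: "\<exists>m. good n m" if n: "n \<ge> 1" for n
  proof (cases "\<exists>s\<ge>1. n = s ^ Suc \<kappa>")
    case True
    then obtain s where s: "s \<ge> 1" "n = s ^ Suc \<kappa>" by blast
    have N: "n ^ \<kappa> * s > 0" using n s by simp
    obtain q p where q: "0 < q" "q \<le> int ((n ^ \<kappa> * s) ^ Suc \<kappa>)"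
      and ap: "\<And>i. i < Suc \<kappa> \<Longrightarrow> \<bar>of_int q * c i - of_int (p i)\<bar> < 1 / real (n ^ \<kappa> * s)"
      using Dirichlet_approx_simult[OF N, where \<theta> = c and n = "Suc \<kappa>"] by blast
    have "(n ^ \<kappa> * s) ^ Suc \<kappa> = n ^ E"
      using s by (simp add: E_def power_mult_distrib power_mult power_add mult.commute)
    moreover have "s' = s" if "s' \<ge> 1" "n = s' ^ Suc \<kappa>" for s'
      using that s by (metis power_inject_base zero_less_Suc zero_le) 
    moreover have "\<forall>s'\<ge>1. n = s' ^ Suc \<kappa> \<longrightarrow> (\<exists>p::nat \<Rightarrow> int. \<forall>i<Suc \<kappa>.
        \<bar>of_int q * c i - of_int (p i)\<bar> < 1 / (real n ^ \<kappa> * real s'))"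
    proof (intro allI impI)
      fix s' assume "s' \<ge> 1" "n = s' ^ Suc \<kappa>"
      then have "s' = s" using s by (metis power_inject_base zero_less_Suc zero_le)
      then show "\<exists>p::nat \<Rightarrow> int. \<forall>i<Suc \<kappa>.
        \<bar>of_int q * c i - of_int (p i)\<bar> < 1 / (real n ^ \<kappa> * real s')"
        using ap by (intro exI[of _ p]) auto
    qed
    ultimately have "good n q" unfolding good_def using q by (auto simp del: power_Suc)
    then show ?thesis by blast
  next
    case False
    then have "good n 1" unfolding good_def using n by auto
    then show ?thesis by blast
  qed
  define M where "M n = (SOME m. good n m)" for n
  have gM: "good n (M n)" if "n \<ge> 1" for n
    unfolding M_def using ex[OF that] by (rule someI_ex)
  define \<rho> where "\<rho> n = real n ^ \<kappa> * of_int (M n)" for n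
  have bounds: "real n ^ \<kappa> \<le> \<rho> n \<and> \<rho> n \<le> real n ^ ((\<kappa> + 1)^2)" if n: "n \<ge> 1" for n
  proof -
    have M1: "1 \<le> M n" and M2: "M n \<le> int n ^ E" using gM[OF n] unfolding good_def by auto
    have M2': "real_of_int (M n) \<le> real n ^ E" using M2
      by (metis of_int_le_iff of_int_of_nat_eq of_int_power)
    have "real n ^ \<kappa> * 1 \<le> \<rho> n" unfolding \<rho>_def using M1 by (intro mult_left_mono) auto
    moreover have "\<rho> n \<le> real n ^ \<kappa> * real n ^ E" unfolding \<rho>_def using M2' by (intro mult_left_mono) auto
    moreover have "real n ^ \<kappa> * real n ^ E = real n ^ ((\<kappa> + 1)^2)"
      by (simp add: E_def power2_eq_square flip: power_add)
    ultimately show ?thesis by simp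
  qed
  have "\<not> equidistributes (\<lambda>n k. \<rho> n *\<^sub>R \<gamma> (real k / real n))"
  proof
    assume eqd: "equidistributes (\<lambda>n k. \<rho> n *\<^sub>R \<gamma> (real k / real n))"
    define f where "f x = cos (2 * pi * (\<Sum>i\<in>UNIV. of_int (h $ i) * x $ i))" for x :: "real ^ 'd"
    have cont: "continuous_on UNIV f" unfolding f_def by (intro continuous_intros)
    have per: "torus_periodic f" unfolding torus_periodic_def
    proof (intro allI)
      fix x :: "real ^ 'd" and z :: "int ^ 'd"
      have sh: "(\<Sum>i\<in>UNIV. of_int (h $ i) * (x + (\<chi> i. real_of_int (z $ i))) $ i)
          = (\<Sum>i\<in>UNIV. of_int (h $ i) * x $ i) + of_int (\<Sum>i\<in>UNIV. h $ i * z $ i)"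
        by (simp add: distrib_left sum.distrib)
      then show "f (x + (\<chi> i. real_of_int (z $ i))) = f x"
      proof -
        have c1: "cos (2 * pi * (\<Sum>i\<in>UNIV. real_of_int (h $ i) * real_of_int (z $ i))) = 1"
          using cos_int_2pin[of "\<Sum>i\<in>UNIV. h $ i * z $ i"] by simp
        have s1: "sin (2 * pi * (\<Sum>i\<in>UNIV. real_of_int (h $ i) * real_of_int (z $ i))) = 0"
          using sin_int_2pin[of "\<Sum>i\<in>UNIV. h $ i * z $ i"] by simp
        show ?thesis unfolding f_def using sh
          by (simp add: distrib_left cos_add c1 s1 del: of_int_sum)
      qed
    qed
    define I where "I = integral (cbox 0 One) f"
    define A where "A n = (1 / real n) * (\<Sum>k=1..n. f (\<rho> n *\<^sub>R \<gamma> (real k / real n)))" for n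
    have lim: "A \<longlonglongrightarrow> I"
      using eqd cont per unfolding equidistributes_def A_def I_def by blast
    have lower: "cos (2 * pi * real (Suc \<kappa>) / real s) \<le> A n"
      if s: "s \<ge> 2 * Suc \<kappa>" and n: "n = s ^ Suc \<kappa>" for s n
    proof -
      have s1: "s \<ge> 1" using s by simp
      have n1: "n \<ge> 1" using n s1 by simp
      obtain p where ap: "\<And>i. i < Suc \<kappa> \<Longrightarrow> \<bar>of_int (M n) * c i - of_int (p i)\<bar> < 1 / (real n ^ \<kappa> * real s)"
        using gM[OF n1] s1 n unfolding good_def by blast
      define b where "b = cos (2 * pi * real (Suc \<kappa>) / real s)"
      have trm: "b \<le> f (\<rho> n *\<^sub>R \<gamma> (real k / real n))" if k: "k \<in> {1..n}" for k
      proof -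
        have x01: "real k / real n \<in> {0..1}" using k by auto
        define v where "v = real n ^ \<kappa> * of_int (M n) * (\<Sum>m<Suc \<kappa>. c m * (real k / real n) ^ m)"
        define Z where "Z = (\<Sum>m<Suc \<kappa>. p m * int k ^ m * int n ^ (\<kappa> - m))"
        have fv: "f (\<rho> n *\<^sub>R \<gamma> (real k / real n)) = cos (2 * pi * v)"
        proof -
          have "(\<Sum>i\<in>UNIV. of_int (h $ i) * (\<rho> n *\<^sub>R \<gamma> (real k / real n)) $ i)
              = \<rho> n * (\<Sum>i\<in>UNIV. of_int (h $ i) * \<gamma> (real k / real n) $ i)"
            by (simp add: sum_distrib_left algebra_simps)
          then show ?thesis unfolding f_def v_def using poly[OF x01] by (simp add: \<rho>_def)
        qed
        have bd: "\<bar>v - of_int Z\<bar> \<le> real (Suc \<kappa>) / real s"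
        proof -
          have kn: "k \<le> n" using k by auto
          show ?thesis unfolding v_def Z_def by (rule approx_bound[OF n1 s1 kn ap])
        qed
        have "\<bar>2 * pi * of_int (- Z) + 2 * pi * v\<bar> = 2 * pi * \<bar>v - of_int Z\<bar>"
        proof -
          have e: "2 * pi * of_int (- Z) + 2 * pi * v = 2 * pi * (v - of_int Z)"
            by (simp add: algebra_simps)
          show ?thesis unfolding e by (simp add: abs_mult)
        qed
        also have "\<dots> \<le> 2 * pi * (real (Suc \<kappa>) / real s)"
          using bd by (intro mult_left_mono) auto
        finally have 1: "\<bar>2 * pi * of_int (- Z) + 2 * pi * v\<bar> \<le> 2 * pi * real (Suc \<kappa>) / real s"
          by simp
        have "real (Suc \<kappa>) / real s \<le> 1 / 2" using s s1 by (simp add: field_simps)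
        have 2: "2 * pi * real (Suc \<kappa>) / real s \<le> pi"
        proof -
          have "2 * pi * (real (Suc \<kappa>) / real s) \<le> 2 * pi * (1 / 2)"
            using \<open>real (Suc \<kappa>) / real s \<le> 1 / 2\<close> by (intro mult_left_mono) auto
          then show ?thesis by simp
        qed
        show ?thesis unfolding fv b_def by (rule cos_monotone_aux[OF 1 2])
      qed
      have "real n * b = (\<Sum>k=1..n. b)" by simp
      also have "\<dots> \<le> (\<Sum>k=1..n. f (\<rho> n *\<^sub>R \<gamma> (real k / real n)))"
        by (rule sum_mono) (use trm in auto)
      finally have "real n * b \<le> (\<Sum>k=1..n. f (\<rho> n *\<^sub>R \<gamma> (real k / real n)))" .
      then have "b \<le> A n" unfolding A_def using n1 by (simp add: field_simps)
      then show ?thesis by (simp add: b_def)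
    qed
    define \<phi> where "\<phi> s = (s + 2 * Suc \<kappa>) ^ Suc \<kappa>" for s
    have sm: "strict_mono \<phi>" unfolding \<phi>_def
      by (intro strict_monoI power_strict_mono) auto
    have lim2: "(A \<circ> \<phi>) \<longlonglongrightarrow> I" by (rule LIMSEQ_subseq_LIMSEQ[OF lim sm])
    have lim3: "(\<lambda>s. cos (2 * pi * real (Suc \<kappa>) / real (s + 2 * Suc \<kappa>))) \<longlonglongrightarrow> 1"
      by real_asymp
    have "1 \<le> I"
    proof (rule LIMSEQ_le[OF lim3 lim2])
      have le: "cos (2 * pi * real (Suc \<kappa>) / real (s + 2 * Suc \<kappa>)) \<le> (A \<circ> \<phi>) s" for s
        unfolding comp_def by (rule lower) (auto simp: \<phi>_def simp del: power_Suc)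
      show "\<exists>N. \<forall>n\<ge>N. cos (2 * pi * real (Suc \<kappa>) / real (n + 2 * Suc \<kappa>)) \<le> (A \<circ> \<phi>) n"
        using le by blast
    qed
    have intf: "f integrable_on cbox 0 One"
      by (rule integrable_continuous) (rule continuous_on_subset[OF cont], auto)
    have hi: "((\<lambda>x. 1 - f x) has_integral (1 - I)) (cbox 0 One)"
      unfolding I_def using has_integral_diff[OF has_integral_const[of "1::real" 0 One] integrable_integral[OF intf]]
      by simp
    have nn: "0 \<le> 1 - f x" for x unfolding f_def by simp
    have "0 \<le> 1 - I" by (rule has_integral_nonneg[OF hi nn])
    with \<open>1 \<le> I\<close> have hi0: "((\<lambda>x. 1 - f x) has_integral 0) (cbox 0 One)" using hi by simp
    obtain j where hj: "h $ j \<noteq> 0" using h0 by (metis vec_eq_iff zero_index)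
    define x0 :: "real ^ 'd" where "x0 = (\<chi> i. if i = j then 1 / (2 * \<bar>real_of_int (h $ j)\<bar>) else 0)"
    have hj1: "1 \<le> \<bar>real_of_int (h $ j)\<bar>" using hj by linarith
    have one: "(One::real^'d) $ i = 1" for i by (metis Cart_1 one_index)
    have x0c: "x0 \<in> cbox 0 One"
      unfolding mem_box_cart x0_def one using hj1 by (auto simp: field_simps)
    have "(\<Sum>i\<in>UNIV. of_int (h $ i) * x0 $ i) = of_int (h $ j) / (2 * \<bar>real_of_int (h $ j)\<bar>)"
      unfolding x0_def by (simp add: if_distrib cong: if_cong)
    then have "(\<Sum>i\<in>UNIV. of_int (h $ i) * x0 $ i) = 1 / 2 \<or> (\<Sum>i\<in>UNIV. of_int (h $ i) * x0 $ i) = - (1 / 2)"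
      using hj by (cases "h $ j > 0") (auto simp: abs_if field_simps)
    then have "f x0 = -1" unfolding f_def
    proof
      assume a: "(\<Sum>i\<in>UNIV. of_int (h $ i) * x0 $ i) = 1 / 2"
      show "cos (2 * pi * (\<Sum>i\<in>UNIV. of_int (h $ i) * x0 $ i)) = -1" by (simp only: a) simp
    next
      assume a: "(\<Sum>i\<in>UNIV. of_int (h $ i) * x0 $ i) = - (1 / 2)"
      show "cos (2 * pi * (\<Sum>i\<in>UNIV. of_int (h $ i) * x0 $ i)) = -1" by (simp only: a) simp
    qed
    moreover have "1 - f x0 = 0"
    proof (rule has_integral_0_cbox_imp_0[OF _ _ hi0 _ x0c])
      show "continuous_on (cbox 0 One) (\<lambda>x. 1 - f x)"
        by (intro continuous_intros continuous_on_subset[OF cont]) auto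
      show "0 \<le> 1 - f x" for x by (rule nn)
      show "box 0 (One :: real ^ 'd) \<noteq> {}" unfolding interval_eq_empty_cart one by simp
    qed
    ultimately show False by simp
  qed
  then show ?thesis using bounds by blast
qed


end
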